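(* For any $\beta,c\ge0$, $N\in\mathbb N$ and $\mathcal L\in\mathcal S$, one has $\widetilde G^{(i)}_N(\beta,c,\mathfrak L_{\mathcal L})=G^{(i)}_N(\beta,c,\mathcal L)$ for $i=1,2$.
   Context: Fix an integer $q\ge2$, $[q]=\{1,\dots,q\}$, $\pi_\lambda$ the Poisson($\lambda$) mass function. $\Delta$ is the set of $\boldsymbol\xi\in[0,1]^{\mathbb N}$ with $\xi_1\ge\xi_2\ge\cdots$ and $\sum\xi_n\le1$; $\Delta_1\subset\Delta$ those with $\sum\xi_n=1$. $[q]^{\mathbb N\times\mathbb N}$ is the set of $\mathcal T=(\tau^{(1)},\tau^{(2)},\dots)$ with $\tau^{(\alpha)}\in[q]^{\mathbb N}$. $\mathcal S$ is the set of Borel probability measures $\mathcal L$ on $\Delta\times[q]^{\mathbb N\times\mathbb N}$ with $\mathcal L(\boldsymbol\xi\in\Delta_1)=1$, invariant under $(\boldsymbol\xi,\mathcal T)\mapsto(\boldsymbol\xi,(\tau^{(1)}\circ\pi,\tau^{(2)}\circ\pi,\dots))$ for every finitely supported permutation $\pi$ of $\mathbb N$ ($(\tau\circ\pi)_n=\tau_{\pi(n)}$). For $\mathcal L\in\mathcal S$, $\mathfrak L_{\mathcal L}$ is the law of $(\tau^{(\mathfrak r_1)},\tau^{(\mathfrak r_2)},\dots)$ where $(\boldsymbol\xi,\mathcal T)\sim\mathcal L$ and, conditionally, $\mathfrak r_1,\mathfrak r_2,\dots$ are i.i.d. $\mathbb N$-valued with $\mathbb P(\mathfrak r_j=\alpha)=\xi_\alpha$.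 Let $\boldsymbol I$ be independent random with $|\boldsymbol I|\sim\pi_{cN}$ and, given $|\boldsymbol I|=k$, $I_1,\dots,I_k$ i.i.d. uniform on $\{1,\dots,N\}$ (expectation $\widetilde{\mathbb E}_{N,c}$); $\widetilde H_N(\boldsymbol I,\tau,\sigma)=\sum_{i=1}^{|\boldsymbol I|}\delta(\tau_i,\sigma_{I_i})$. $G^{(1)}_N(\beta,c,\mathcal L)=\int\widetilde{\mathbb E}_{N,c}\big[\frac1N\ln\sum_\alpha\xi_\alpha\sum_{\sigma\in[q]^N}e^{-\beta\widetilde H_N(\boldsymbol I,\tau^{(\alpha)},\sigma)}\big]d\mathcal L$ and $G^{(2)}_N(\beta,c,\mathcal L)=\int\sum_{K\ge0}\frac{\pi_{cN/2}(K)}{N}\ln\big(\sum_\alpha\xi_\alpha e^{-\beta\sum_{k=1}^K\delta(\tau^{(\alpha)}_{2k-1},\tau^{(\alpha)}_{2k})}\big)d\mathcal L$. For a probability measure $\mathfrak L$ on $[q]^{\mathbb N\times\mathbb N}$ and $R\in\mathbb N$: $G^{(1)}_{N,R}(\beta,c,\mathfrak L)=\int\widetilde{\mathbb E}_{N,c}\big[\frac1N\ln\sum_{r=1}^R\frac1R\sum_{\sigma}e^{-\beta\widetilde H_N(\boldsymbol I,\tau^{(r)},\sigma)}\big]d\mathfrak L$ and $G^{(2)}_{N,R}(\beta,c,\mathfrak L)=\int\sum_{K\ge0}\frac{\pi_{cN/2}(K)}{N}\ln\big(\sum_{r=1}^R\frac1Re^{-\beta\sum_{k=1}^K\delta(\tau^{(r)}_{2k-1},\tau^{(r)}_{2k})}\big)d\mathfrak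 L$, and $\widetilde G^{(i)}_N(\beta,c,\mathfrak L)=\lim_{R\to\infty}G^{(i)}_{N,R}(\beta,c,\mathfrak L)$. *)

theory Defs
  imports "HOL-Probability.Probability"
begin

text \<open>Conventions: sequences indexed by the paper's positive integers 1,2,3,... are
represented as functions on nat indexed from 0 (shift by one). Spins take values in
[q] = {1..q}; sites are {1..N}.\<close>

definition pois :: "real \<Rightarrow> nat \<Rightarrow> real" where
  "pois lam k = exp (- lam) * lam ^ k / fact k"

definition kdelta :: "nat \<Rightarrow> nat \<Rightarrow> real" where
  "kdelta a b = (if a = b then 1 else 0)"

definition Delta :: "(nat \<Rightarrow> real) set" where
  "Delta = {xi. (\<forall>n. 0 \<le> xi n \<and> xi n \<le> 1) \<and> (\<forall>n. xi (Suc n) \<le> xi n)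
                \<and> summable xi \<and> suminf xi \<le> 1}"

definition Delta1 :: "(nat \<Rightarrow> real) set" where
  "Delta1 = {xi \<in> Delta. suminf xi = 1}"

definition Mxi :: "(nat \<Rightarrow> real) measure" where
  "Mxi = PiM UNIV (\<lambda>_. borel)"

text \<open>Measurable space [q]^(N x N): T alpha n = tau^(alpha)_n.\<close>
definition MT :: "nat \<Rightarrow> (nat \<Rightarrow> nat \<Rightarrow> nat) measure" where
  "MT q = PiM UNIV (\<lambda>_. PiM UNIV (\<lambda>_. count_space {1..q}))"

definition finperm :: "(nat \<Rightarrow> nat) \<Rightarrow> bool" where
  "finperm p \<longleftrightarrow> bij p \<and> finite {n. p n \<noteq> n}"

definition S_laws :: "nat \<Rightarrow> ((nat \<Rightarrow> real) \<times> (nat \<Rightarrow> nat \<Rightarrow> nat)) measure set" where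
  "S_laws q = {L. prob_space L \<and> sets L = sets (Mxi \<Otimes>\<^sub>M MT q)
      \<and> emeasure L {x \<in> space L. fst x \<in> Delta1} = 1
      \<and> (\<forall>p. finperm p \<longrightarrow>
            distr L (Mxi \<Otimes>\<^sub>M MT q) (\<lambda>(xi, T). (xi, \<lambda>a n. T a (p n))) = L)}"

definition wmeas :: "(nat \<Rightarrow> real) \<Rightarrow> nat measure" where
  "wmeas xi = density (count_space UNIV) (\<lambda>n. ennreal (xi n))"

text \<open>The law frak L_L of (tau^(r_1), tau^(r_2), ...), r_j i.i.d. with P(r_j = alpha) = xi_alpha.
  (The else-branch is irrelevant since xi is in Delta1 almost surely.)\<close>
definition frakL :: "nat \<Rightarrow> ((nat \<Rightarrow> real) \<times> (nat \<Rightarrow> nat \<Rightarrow> nat)) measure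
                      \<Rightarrow> (nat \<Rightarrow> nat \<Rightarrow> nat) measure" where
  "frakL q L = bind L (\<lambda>(xi, T).
      if xi \<in> Delta1 then distr (PiM UNIV (\<lambda>_. wmeas xi)) (MT q) (\<lambda>r j. T (r j))
      else return (MT q) (\<lambda>_ _. 1))"

text \<open>Expectation over the random multiset I: |I| ~ Poisson(cN), I_1..I_k iid uniform on {1..N}.
  f k I with I restricted to {..<k} (I i is the paper's I_(i+1)).\<close>
definition EI :: "nat \<Rightarrow> real \<Rightarrow> (nat \<Rightarrow> (nat \<Rightarrow> nat) \<Rightarrow> real) \<Rightarrow> real" where
  "EI N c f = (\<Sum>k. pois (c * real N) k *
       ((\<Sum>I\<in>PiE {..<k} (\<lambda>_. {1..N}). f k I) / real N ^ k))"

definition Htil :: "nat \<Rightarrow> (nat \<Rightarrow> nat) \<Rightarrow> (nat \<Rightarrow> nat) \<Rightarrow> (nat \<Rightarrow> nat) \<Rightarrow> real" where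
  "Htil k I tau sg = (\<Sum>i<k. kdelta (tau i) (sg (I i)))"

definition spins :: "nat \<Rightarrow> nat \<Rightarrow> (nat \<Rightarrow> nat) set" where
  "spins q N = PiE {1..N} (\<lambda>_. {1..q})"

definition Zsite :: "nat \<Rightarrow> nat \<Rightarrow> real \<Rightarrow> nat \<Rightarrow> (nat \<Rightarrow> nat) \<Rightarrow> (nat \<Rightarrow> nat) \<Rightarrow> real" where
  "Zsite q N beta k I tau = (\<Sum>sg\<in>spins q N. exp (- beta * Htil k I tau sg))"

text \<open>sum_{k=1}^K delta(tau_(2k-1), tau_(2k)), 0-indexed.\<close>
definition Hpair :: "nat \<Rightarrow> (nat \<Rightarrow> nat) \<Rightarrow> real" where
  "Hpair K tau = (\<Sum>k<K. kdelta (tau (2 * k)) (tau (2 * k + 1)))"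

definition G1 :: "nat \<Rightarrow> nat \<Rightarrow> real \<Rightarrow> real \<Rightarrow>
    ((nat \<Rightarrow> real) \<times> (nat \<Rightarrow> nat \<Rightarrow> nat)) measure \<Rightarrow> real" where
  "G1 q N beta c L = (\<integral>x. (case x of (xi, T) \<Rightarrow>
      EI N c (\<lambda>k I. (1 / real N) * ln (\<Sum>a. xi a * Zsite q N beta k I (T a)))) \<partial>L)"

definition G2 :: "nat \<Rightarrow> real \<Rightarrow> real \<Rightarrow>
    ((nat \<Rightarrow> real) \<times> (nat \<Rightarrow> nat \<Rightarrow> nat)) measure \<Rightarrow> real" where
  "G2 N beta c L = (\<integral>x. (case x of (xi, T) \<Rightarrow>
      (\<Sum>K. pois (c * real N / 2) K / real N *
             ln (\<Sum>a. xi a * exp (- beta * Hpair K (T a))))) \<partial>L)"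

definition G1R :: "nat \<Rightarrow> nat \<Rightarrow> nat \<Rightarrow> real \<Rightarrow> real \<Rightarrow> (nat \<Rightarrow> nat \<Rightarrow> nat) measure \<Rightarrow> real" where
  "G1R q N R beta c FL = (\<integral>T.
      EI N c (\<lambda>k I. (1 / real N) * ln (\<Sum>r<R. (1 / real R) * Zsite q N beta k I (T r))) \<partial>FL)"

definition G2R :: "nat \<Rightarrow> nat \<Rightarrow> real \<Rightarrow> real \<Rightarrow> (nat \<Rightarrow> nat \<Rightarrow> nat) measure \<Rightarrow> real" where
  "G2R N R beta c FL = (\<integral>T.
      (\<Sum>K. pois (c * real N / 2) K / real N *
             ln (\<Sum>r<R. (1 / real R) * exp (- beta * Hpair K (T r)))) \<partial>FL)"

end

theory Submission
  imports Defs
begin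


lemma abs_le_delta: fixes d delta :: real assumes "delta > 0"
  shows "\<bar>d\<bar> \<le> delta / 2 + d\<^sup>2 / (2 * delta)"
proof -
  have "0 \<le> (\<bar>d\<bar> - delta)\<^sup>2" by simp
  hence "2 * delta * \<bar>d\<bar> \<le> delta\<^sup>2 + d\<^sup>2" by (simp add: power2_eq_square algebra_simps)
  thus ?thesis using assms by (simp add: field_simps power2_eq_square)
qed

context product_prob_space
begin

lemma integral_pair_coords:
  fixes g :: "'a \<Rightarrow> real"
  assumes "\<And>i. i \<in> I \<Longrightarrow> M i = W" and g[measurable]: "g \<in> borel_measurable W"
    and bnd: "\<And>x. \<bar>g x\<bar> \<le> b"
    and r: "r \<in> I" and s: "s \<in> I" and rs: "r \<noteq> s"
  shows "(\<integral>\<omega>. g (\<omega> r) * g (\<omega> s) \<partial>PiM I M) = integral\<^sup>L W g * integral\<^sup>L W g"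
proof -
  have J: "finite {r,s}" "{r,s} \<subseteq> I" using r s by auto
  have MJ: "\<And>i. i \<in> {r,s} \<Longrightarrow> M i = W" using assms(1) r s by auto
  have meas: "(\<lambda>x. \<Prod>i\<in>{r,s}. g (x i)) \<in> borel_measurable (PiM {r,s} M)"
    by (rule borel_measurable_prod) (auto intro!: measurable_compose[OF measurable_component_singleton] simp: MJ)
  have "(\<integral>\<omega>. g (\<omega> r) * g (\<omega> s) \<partial>PiM I M) = (\<integral>\<omega>. (\<Prod>i\<in>{r,s}. g (restrict \<omega> {r,s} i)) \<partial>PiM I M)"
    using rs by simp
  also have "\<dots> = (\<integral>x. (\<Prod>i\<in>{r,s}. g (x i)) \<partial>distr (PiM I M) (PiM {r,s} M) (\<lambda>\<omega>. restrict \<omega> {r,s}))"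
    by (rule integral_distr[symmetric, OF measurable_restrict_subset[OF J(2)] meas])
  also have "\<dots> = (\<integral>x. (\<Prod>i\<in>{r,s}. g (x i)) \<partial>PiM {r,s} M)"
    using distr_PiM_restrict_finite[OF J] by simp
  also have "\<dots> = (\<Prod>i\<in>{r,s}. integral\<^sup>L (M i) g)"
  proof (rule product_integral_prod[where f="\<lambda>_. g"])
    fix i assume "i \<in> {r,s}"
    then have "M i = W" using MJ by auto
    interpret Mi: prob_space "M i" by (rule M.prob_space_axioms)
    show "integrable (M i) g" using bnd \<open>M i = W\<close>
      by (intro M.integrable_const_bound[where B=b]) (use g \<open>M i = W\<close> in auto)
  qed simp
  also have "\<dots> = integral\<^sup>L W g * integral\<^sup>L W g" using rs MJ by simp
  finally show ?thesis .
qed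

end

lemma coord_meas:
  assumes "\<And>i. i \<in> I \<Longrightarrow> M i = W" and g[measurable]: "g \<in> borel_measurable W" and r: "r \<in> I"
  shows "(\<lambda>\<omega>. g (\<omega> r)) \<in> borel_measurable (PiM I M)"
proof -
  have "(\<lambda>\<omega>. \<omega> r) \<in> measurable (PiM I M) W"
    using measurable_component_singleton[OF r, of M] assms(1)[OF r] by simp
  then show ?thesis using g by (rule measurable_compose)
qed

lemma sq_sum_bound:
  fixes g :: "'a \<Rightarrow> real" and R :: nat
  assumes Wp: "prob_space W" and g[measurable]: "g \<in> borel_measurable W"
    and bnd: "\<And>x. \<bar>g x\<bar> \<le> b"
  defines "I \<equiv> (UNIV :: nat set)" and "M \<equiv> (\<lambda>_::nat. W)"
  shows "(\<integral>\<omega>. (\<Sum>r<R. g (\<omega> r) - integral\<^sup>L W g)\<^sup>2 \<partial>PiM I M) \<le> real R * (2*b)\<^sup>2"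
proof -
  have b0: "0 \<le> b" using bnd[of undefined] by linarith
  define \<mu> where "\<mu> = integral\<^sup>L W g"
  define h where "h x = g x - \<mu>" for x
  interpret product_prob_space M I unfolding product_prob_space_def product_prob_space_axioms_def product_sigma_finite_def using Wp by (auto simp: M_def intro: prob_space_imp_sigma_finite)
  have MW: "\<And>i. i \<in> I \<Longrightarrow> M i = W" by (simp add: M_def)
  have RI: "{..<R} \<subseteq> I" by (simp add: I_def)
  have mub: "\<bar>\<mu>\<bar> \<le> b" if "R > 0"
  proof -
    interpret prob_space W by (rule Wp)
    have "\<bar>\<mu>\<bar> \<le> integral\<^sup>L W (\<lambda>x. \<bar>g x\<bar>)" unfolding \<mu>_def by (rule integral_abs_bound)
    also have "\<dots> \<le> integral\<^sup>L W (\<lambda>x. b)"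
      using bnd b0 by (intro integral_mono integrable_const_bound[where B=b]) auto
    finally show ?thesis by (simp add: prob_space)
  qed
  have hm[measurable]: "h \<in> borel_measurable W" unfolding h_def by simp
  have hb: "\<bar>h x\<bar> \<le> 2*b" if "R > 0" for x using bnd[of x] mub[OF that] unfolding h_def by linarith
  have hc: "(\<lambda>\<omega>. h (\<omega> r)) \<in> borel_measurable (PiM I M)" if "r < R" for r
    using coord_meas[OF MW hm, where r=r] RI that by auto
  have int: "integrable (PiM I M) (\<lambda>\<omega>. h (\<omega> r) * h (\<omega> s))" if "r < R" "s < R" for r s
  proof (rule P.integrable_const_bound[where B="(2*b)*(2*b)"])
    show "AE x in Pi\<^sub>M I M. norm (h (x r) * h (x s)) \<le> 2 * b * (2 * b)"
    proof (rule AE_I2)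
      fix x
      have "\<bar>h (x r)\<bar> * \<bar>h (x s)\<bar> \<le> (2*b) * (2*b)"
        using hb[of "x r"] hb[of "x s"] that by (intro mult_mono) auto
      then show "norm (h (x r) * h (x s)) \<le> 2 * b * (2 * b)" by (simp add: abs_mult)
    qed
    show "(\<lambda>x. h (x r) * h (x s)) \<in> borel_measurable (Pi\<^sub>M I M)"
      using hc that by measurable
  qed
  have "(\<integral>\<omega>. (\<Sum>r<R. g (\<omega> r) - integral\<^sup>L W g)\<^sup>2 \<partial>PiM I M)
      = (\<integral>\<omega>. (\<Sum>r<R. \<Sum>s<R. h (\<omega> r) * h (\<omega> s)) \<partial>PiM I M)"
    by (simp add: h_def \<mu>_def power2_eq_square sum_product)
  also have "\<dots> = (\<Sum>r<R. \<Sum>s<R. (\<integral>\<omega>. h (\<omega> r) * h (\<omega> s) \<partial>PiM I M))"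
  proof -
    have "(\<integral>\<omega>. (\<Sum>r<R. \<Sum>s<R. h (\<omega> r) * h (\<omega> s)) \<partial>PiM I M) = (\<Sum>r<R. (\<integral>\<omega>. (\<Sum>s<R. h (\<omega> r) * h (\<omega> s)) \<partial>PiM I M))"
      by (rule Bochner_Integration.integral_sum) (use int in \<open>auto intro!: Bochner_Integration.integrable_sum\<close>)
    also have "\<dots> = (\<Sum>r<R. \<Sum>s<R. (\<integral>\<omega>. h (\<omega> r) * h (\<omega> s) \<partial>PiM I M))"
      by (intro sum.cong refl Bochner_Integration.integral_sum) (use int in auto)
    finally show ?thesis .
  qed
  also have "\<dots> \<le> (\<Sum>r<R. (2*b)\<^sup>2)"
  proof (rule sum_mono)
    fix r assume r: "r \<in> {..<R}"
    then have R0: "R > 0" by auto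
    have "(\<Sum>s<R. (\<integral>\<omega>. h (\<omega> r) * h (\<omega> s) \<partial>PiM I M)) = (\<Sum>s\<in>{r}. (\<integral>\<omega>. h (\<omega> r) * h (\<omega> s) \<partial>PiM I M))"
    proof (rule sum.mono_neutral_right)
      show "\<forall>s\<in>{..<R} - {r}. (\<integral>\<omega>. h (\<omega> r) * h (\<omega> s) \<partial>PiM I M) = 0"
      proof
        fix s assume s: "s \<in> {..<R} - {r}"
        have "(\<integral>\<omega>. h (\<omega> r) * h (\<omega> s) \<partial>PiM I M) = integral\<^sup>L W h * integral\<^sup>L W h"
          by (rule integral_pair_coords[OF MW hm hb[OF R0]]) (use r s RI in auto)
        also have "integral\<^sup>L W h = 0"
        proof -
          interpret prob_space W by (rule Wp)
          have "integrable W g" using bnd by (intro integrable_const_bound[where B=b]) auto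
          then show ?thesis unfolding h_def \<mu>_def by (simp add: prob_space)
        qed
        finally show "(\<integral>\<omega>. h (\<omega> r) * h (\<omega> s) \<partial>PiM I M) = 0" by simp
      qed
    qed (use r in auto)
    also have "\<dots> = (\<integral>\<omega>. (h (\<omega> r))\<^sup>2 \<partial>PiM I M)" by (simp add: power2_eq_square)
    also have "\<dots> \<le> (\<integral>\<omega>. (2*b)\<^sup>2 \<partial>PiM I M)"
    proof (rule integral_mono)
      show "integrable (Pi\<^sub>M I M) (\<lambda>\<omega>. (h (\<omega> r))\<^sup>2)" using int[of r r] r by (simp add: power2_eq_square)
      show "(\<lambda>\<omega>. (h (\<omega> r))\<^sup>2) \<omega> \<le> (2 * b)\<^sup>2" for \<omega>
        using hb[OF R0, of "\<omega> r"] by (metis abs_le_square_iff abs_of_nonneg b0 mult_nonneg_nonneg zero_le_numeral)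
    qed simp
    also have "\<dots> = (2*b)\<^sup>2" by (simp add: P.prob_space)
    finally show "(\<Sum>s<R. (\<integral>\<omega>. h (\<omega> r) * h (\<omega> s) \<partial>PiM I M)) \<le> (2*b)\<^sup>2" .
  qed
  also have "\<dots> = real R * (2*b)\<^sup>2" by simp
  finally show ?thesis .
qed


lemma mean_L1_bound:
  fixes g :: "'a \<Rightarrow> real" and R :: nat
  assumes Wp: "prob_space W" and g[measurable]: "g \<in> borel_measurable W"
    and bnd: "\<And>x. \<bar>g x\<bar> \<le> b" and R: "R > 0" and b: "b > 0"
  shows "(\<integral>\<omega>. \<bar>(\<Sum>r<R. (1 / real R) * g (\<omega> r)) - integral\<^sup>L W g\<bar> \<partial>PiM UNIV (\<lambda>_. W)) \<le> 2 * b / sqrt R"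
proof -
  define I where "I = (UNIV :: nat set)"
  define M where "M = (\<lambda>_::nat. W)"
  interpret product_prob_space M I unfolding product_prob_space_def product_prob_space_axioms_def product_sigma_finite_def using Wp by (auto simp: M_def intro: prob_space_imp_sigma_finite)
  define \<mu> where "\<mu> = integral\<^sup>L W g"
  define S where "S \<omega> = (\<Sum>r<R. g (\<omega> r) - \<mu>)" for \<omega> :: "nat \<Rightarrow> 'a"
  define \<delta> where "\<delta> = 2 * b / sqrt R"
  have sR: "sqrt R > 0" using R by simp
  have d0: "\<delta> > 0" using b sR by (simp add: \<delta>_def)
  have mub: "\<bar>\<mu>\<bar> \<le> b"
  proof -
    interpret prob_space W by (rule Wp)
    have "\<bar>\<mu>\<bar> \<le> integral\<^sup>L W (\<lambda>x. \<bar>g x\<bar>)" unfolding \<mu>_def by (rule integral_abs_bound)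
    also have "\<dots> \<le> integral\<^sup>L W (\<lambda>x. b)"
      using bnd b by (intro integral_mono integrable_const_bound[where B=b]) auto
    finally show ?thesis by (simp add: prob_space)
  qed
  have eq: "(\<Sum>r<R. (1 / real R) * g (\<omega> r)) - \<mu> = S \<omega> / R" for \<omega>
    using R by (simp add: S_def sum_subtractf sum_divide_distrib[symmetric] field_simps)
  have Sm: "S \<in> borel_measurable (PiM I M)" unfolding S_def
    by (intro borel_measurable_sum borel_measurable_diff borel_measurable_const coord_meas[OF _ g]) (auto simp: M_def I_def)
  have Sb: "\<bar>S \<omega>\<bar> \<le> R * (2*b)" for \<omega>
  proof -
    have "\<bar>S \<omega>\<bar> \<le> (\<Sum>r<R. \<bar>g (\<omega> r) - \<mu>\<bar>)" unfolding S_def by (rule sum_abs)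
    also have "\<dots> \<le> (\<Sum>r<R. 2*b)" proof (rule sum_mono)
      fix r show "\<bar>g (\<omega> r) - \<mu>\<bar> \<le> 2*b" using bnd[of "\<omega> r"] mub by linarith
    qed
    finally show ?thesis by simp
  qed
  have Sb2: "(S \<omega>)\<^sup>2 \<le> (R*(2*b))\<^sup>2" for \<omega>
  proof -
    have "\<bar>S \<omega>\<bar>\<^sup>2 \<le> (R*(2*b))\<^sup>2" by (rule power_mono[OF Sb]) simp
    then show ?thesis by simp
  qed
  have Sb1: "\<bar>S \<omega> / R\<bar> \<le> R*(2*b)" for \<omega>
  proof -
    have "\<bar>S \<omega> / R\<bar> = \<bar>S \<omega>\<bar> / R" by simp
    also have "\<dots> \<le> \<bar>S \<omega>\<bar>" proof -
      have "1 \<le> real R" using R by simp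
      then have "\<bar>S \<omega>\<bar> * 1 \<le> \<bar>S \<omega>\<bar> * real R" by (intro mult_left_mono) auto
      then show ?thesis using R by (simp add: divide_le_eq)
    qed
    finally show ?thesis using Sb[of \<omega>] by linarith
  qed
  have intS2: "integrable (PiM I M) (\<lambda>\<omega>. (S \<omega>)\<^sup>2)"
    by (rule P.integrable_const_bound[where B="(R*(2*b))\<^sup>2"])
       (use Sm Sb2 in \<open>auto intro!: AE_I2\<close>)
  have intS1: "integrable (PiM I M) (\<lambda>\<omega>. \<bar>S \<omega> / R\<bar>)"
    by (rule P.integrable_const_bound[where B="(R*(2*b))"])
       (use Sm Sb1 in \<open>auto intro!: AE_I2\<close>)
  have "(\<integral>\<omega>. \<bar>(\<Sum>r<R. (1 / real R) * g (\<omega> r)) - integral\<^sup>L W g\<bar> \<partial>PiM UNIV (\<lambda>_. W))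
      = (\<integral>\<omega>. \<bar>S \<omega> / R\<bar> \<partial>PiM I M)" unfolding \<mu>_def[symmetric] eq I_def M_def ..
  also have "\<dots> \<le> (\<integral>\<omega>. \<delta> / 2 + (S \<omega>)\<^sup>2 / (2 * \<delta> * R\<^sup>2) \<partial>PiM I M)"
  proof (rule integral_mono[OF intS1])
    show "integrable (PiM I M) (\<lambda>\<omega>. \<delta> / 2 + (S \<omega>)\<^sup>2 / (2 * \<delta> * R\<^sup>2))"
      using intS2 by auto
    fix \<omega>
    have "\<bar>S \<omega> / R\<bar> \<le> \<delta> / 2 + (S \<omega> / R)\<^sup>2 / (2 * \<delta>)" by (rule abs_le_delta[OF d0])
    also have "(S \<omega> / R)\<^sup>2 / (2 * \<delta>) = (S \<omega>)\<^sup>2 / (2 * \<delta> * R\<^sup>2)" by (simp add: power_divide)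
    finally show "\<bar>S \<omega> / R\<bar> \<le> \<delta> / 2 + (S \<omega>)\<^sup>2 / (2 * \<delta> * R\<^sup>2)" .
  qed
  also have "\<dots> = \<delta> / 2 + (\<integral>\<omega>. (S \<omega>)\<^sup>2 \<partial>PiM I M) / (2 * \<delta> * R\<^sup>2)"
    using intS2 by (simp add: P.prob_space)
  also have "\<dots> \<le> \<delta> / 2 + (R * (2*b)\<^sup>2) / (2 * \<delta> * R\<^sup>2)"
  proof -
    have "(\<integral>\<omega>. (S \<omega>)\<^sup>2 \<partial>PiM I M) \<le> R * (2*b)\<^sup>2"
      using sq_sum_bound[OF Wp g bnd, of R] unfolding S_def \<mu>_def I_def M_def .
    then show ?thesis using d0 R by (intro add_left_mono divide_right_mono) auto
  qed
  also have "\<dots> = 2 * b / sqrt R"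
  proof -
    have "R = sqrt R * sqrt R" by simp
    then show ?thesis unfolding \<delta>_def using sR b
      by (simp add: field_simps power2_eq_square)
  qed
  finally show ?thesis .
qed



lemma ln_diff_bound:
  fixes a x y :: real assumes "a > 0" "a \<le> x" "a \<le> y"
  shows "\<bar>ln x - ln y\<bar> \<le> \<bar>x - y\<bar> / a"
proof -
  have x0: "x > 0" and y0: "y > 0" using assms by auto
  have 1: "ln x - ln y \<le> (x - y) / y"
  proof -
    have "ln (x / y) \<le> x / y - 1" using x0 y0 by (intro ln_le_minus_one) auto
    then show ?thesis using x0 y0 by (simp add: ln_div field_simps)
  qed
  have 2: "ln y - ln x \<le> (y - x) / x"
  proof -
    have "ln (y / x) \<le> y / x - 1" using x0 y0 by (intro ln_le_minus_one) auto
    then show ?thesis using x0 y0 by (simp add: ln_div field_simps)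
  qed
  have "(x - y) / y \<le> \<bar>x - y\<bar> / a" using assms y0
    by (meson abs_ge_self abs_ge_zero frac_le order_trans divide_right_mono)
  moreover have "(y - x) / x \<le> \<bar>x - y\<bar> / a" using assms x0
    by (metis abs_ge_zero abs_minus_commute abs_ge_self frac_le order_trans divide_right_mono)
  ultimately show ?thesis using 1 2 by linarith
qed

lemma ln_abs_bound:
  fixes a b x :: real assumes "a > 0" "a \<le> x" "x \<le> b"
  shows "\<bar>ln x\<bar> \<le> \<bar>ln a\<bar> + \<bar>ln b\<bar>"
proof -
  have "ln a \<le> ln x" "ln x \<le> ln b" using assms by auto
  then show ?thesis by linarith
qed

lemma mean_bounds:
  fixes f :: "nat \<Rightarrow> real" assumes "R > 0" "\<And>r. a \<le> f r" "\<And>r. f r \<le> b"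
  shows "a \<le> (\<Sum>r<R. (1 / real R) * f r)" "(\<Sum>r<R. (1 / real R) * f r) \<le> b"
proof -
  have "(\<Sum>r<R. (1 / real R) * a) \<le> (\<Sum>r<R. (1 / real R) * f r)"
    using assms by (intro sum_mono mult_left_mono) auto
  then show "a \<le> (\<Sum>r<R. (1 / real R) * f r)" using assms by simp
  have "(\<Sum>r<R. (1 / real R) * f r) \<le> (\<Sum>r<R. (1 / real R) * b)"
    using assms by (intro sum_mono mult_left_mono) auto
  then show "(\<Sum>r<R. (1 / real R) * f r) \<le> b" using assms by simp
qed

lemma series_bound:
  fixes f g :: "nat \<Rightarrow> real"
  assumes "\<And>k. \<bar>f k\<bar> \<le> g k" "summable g"
  shows "summable f" "\<bar>suminf f\<bar> \<le> suminf g"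
proof -
  have sa: "summable (\<lambda>k. \<bar>f k\<bar>)" using assms by (intro summable_comparison_test[OF _ assms(2)]) auto
  then show "summable f" by (rule summable_rabs_cancel)
  have "\<bar>suminf f\<bar> \<le> (\<Sum>k. \<bar>f k\<bar>)" by (rule summable_rabs[OF sa])
  also have "\<dots> \<le> suminf g" using sa assms by (intro suminf_le) auto
  finally show "\<bar>suminf f\<bar> \<le> suminf g" .
qed

lemma finsum_ln_bound:
  fixes u :: "'j \<Rightarrow> real"
  assumes "\<And>j. j \<in> J \<Longrightarrow> u j \<ge> 0" "\<And>j. j \<in> J \<Longrightarrow> \<bar>ln (x j)\<bar> \<le> \<Lambda>"
  shows "\<bar>\<Sum>j\<in>J. u j * ln (x j)\<bar> \<le> (\<Sum>j\<in>J. u j) * \<Lambda>"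
proof -
  have "\<bar>\<Sum>j\<in>J. u j * ln (x j)\<bar> \<le> (\<Sum>j\<in>J. \<bar>u j * ln (x j)\<bar>)" by (rule sum_abs)
  also have "\<dots> \<le> (\<Sum>j\<in>J. u j * \<Lambda>)"
    using assms by (intro sum_mono) (auto simp: abs_mult intro: mult_left_mono)
  finally show ?thesis by (simp add: sum_distrib_right)
qed


lemma inner_conv:
  fixes W :: "nat measure" and J :: "nat \<Rightarrow> 'j set" and u :: "nat \<Rightarrow> 'j \<Rightarrow> real"
    and \<gamma> :: "nat \<Rightarrow> 'j \<Rightarrow> nat \<Rightarrow> real" and a :: "nat \<Rightarrow> real" and b :: real
  assumes Wp: "prob_space W" and Wm: "\<And>f::nat\<Rightarrow>real. f \<in> borel_measurable W"
    and fin: "\<And>k. finite (J k)" and u0: "\<And>k j. u k j \<ge> 0" and a0: "\<And>k. a k > 0"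
    and ga: "\<And>k j \<alpha>. a k \<le> \<gamma> k j \<alpha>" and gb: "\<And>k j \<alpha>. \<gamma> k j \<alpha> \<le> b"
    and sm: "summable (\<lambda>k. (\<Sum>j\<in>J k. u k j) * (\<bar>ln (a k)\<bar> + \<bar>ln b\<bar>))"
  shows "(\<lambda>R. \<integral>\<omega>. (\<Sum>k. \<Sum>j\<in>J k. u k j * ln (\<Sum>r<R. (1 / real R) * \<gamma> k j (\<omega> r))) \<partial>PiM UNIV (\<lambda>_. W))
     \<longlonglongrightarrow> (\<Sum>k. \<Sum>j\<in>J k. u k j * ln (integral\<^sup>L W (\<gamma> k j)))"
proof -
  define P where "P = PiM UNIV (\<lambda>_::nat. W)"
  interpret Wp: prob_space W by (rule Wp)
  interpret PP: product_prob_space "\<lambda>_::nat. W" UNIV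
    unfolding product_prob_space_def product_prob_space_axioms_def product_sigma_finite_def
    using Wp by (auto intro: prob_space_imp_sigma_finite)
  interpret Pp: prob_space P unfolding P_def by (rule PP.P.prob_space_axioms)
  define \<Lambda> where "\<Lambda> k = \<bar>ln (a k)\<bar> + \<bar>ln b\<bar>" for k
  define U where "U k = (\<Sum>j\<in>J k. u k j)" for k
  define m where "m R k j \<omega> = (\<Sum>r<R. (1 / real R) * \<gamma> k j (\<omega> r))" for R k j and \<omega> :: "nat \<Rightarrow> nat"
  define \<mu> where "\<mu> k j = integral\<^sup>L W (\<gamma> k j)" for k j
  define A where "A R \<omega> = (\<Sum>k. \<Sum>j\<in>J k. u k j * ln (m R k j \<omega>))" for R \<omega>
  define A0 where "A0 = (\<Sum>k. \<Sum>j\<in>J k. u k j * ln (\<mu> k j))"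
  have U0: "U k \<ge> 0" for k unfolding U_def using u0 by (simp add: sum_nonneg)
  have L0: "\<Lambda> k \<ge> 0" for k unfolding \<Lambda>_def by simp
  have b0: "b > 0" using a0[of 0] ga[of 0 undefined 0] gb[of 0 undefined 0] by linarith
  have gm[measurable]: "\<gamma> k j \<in> borel_measurable W" for k j using Wm .
  have gabs: "\<bar>\<gamma> k j \<alpha>\<bar> \<le> b" for k j \<alpha> using ga[of k j \<alpha>] gb[of k j \<alpha>] a0[of k] by linarith
  have intg: "integrable W (\<gamma> k j)" for k j
    by (rule Wp.integrable_const_bound[where B=b]) (use gabs in auto)
  have \<mu>b: "a k \<le> \<mu> k j" "\<mu> k j \<le> b" for k j
  proof -
    have "integral\<^sup>L W (\<lambda>_. a k) \<le> \<mu> k j" unfolding \<mu>_def using ga intg by (intro integral_mono) auto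
    then show "a k \<le> \<mu> k j" by (simp add: Wp.prob_space)
    have "\<mu> k j \<le> integral\<^sup>L W (\<lambda>_. b)" unfolding \<mu>_def using gb intg by (intro integral_mono) auto
    then show "\<mu> k j \<le> b" by (simp add: Wp.prob_space)
  qed
  have mb: "a k \<le> m R k j \<omega>" "m R k j \<omega> \<le> b" if "R > 0" for R k j \<omega>
    unfolding m_def using mean_bounds[OF that, where a="a k" and f="\<lambda>r. \<gamma> k j (\<omega> r)" and b=b] ga gb by auto
  have ln\<mu>: "\<bar>ln (\<mu> k j)\<bar> \<le> \<Lambda> k" for k j
    unfolding \<Lambda>_def by (rule ln_abs_bound[OF a0 \<mu>b])
  have lnm: "\<bar>ln (m R k j \<omega>)\<bar> \<le> \<Lambda> k" if "R > 0" for R k j \<omega>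
    unfolding \<Lambda>_def by (rule ln_abs_bound[OF a0 mb[OF that]])
  have termA: "\<bar>\<Sum>j\<in>J k. u k j * ln (m R k j \<omega>)\<bar> \<le> U k * \<Lambda> k" if "R > 0" for R k \<omega>
    unfolding U_def by (rule finsum_ln_bound) (use u0 lnm[OF that] in auto)
  have termA0: "\<bar>\<Sum>j\<in>J k. u k j * ln (\<mu> k j)\<bar> \<le> U k * \<Lambda> k" for k
    unfolding U_def by (rule finsum_ln_bound) (use u0 ln\<mu> in auto)
  have smUL: "summable (\<lambda>k. U k * \<Lambda> k)" using sm unfolding U_def \<Lambda>_def .
  have smA: "summable (\<lambda>k. \<Sum>j\<in>J k. u k j * ln (m R k j \<omega>))" if "R > 0" for R \<omega>
    by (rule series_bound(1)[OF termA[OF that] smUL])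
  have smA0: "summable (\<lambda>k. \<Sum>j\<in>J k. u k j * ln (\<mu> k j))"
    by (rule series_bound(1)[OF termA0 smUL])
  have mm[measurable]: "m R k j \<in> borel_measurable P" for R k j
    unfolding m_def P_def by measurable
  have Am[measurable]: "A R \<in> borel_measurable P" for R
    unfolding A_def by measurable
  have Ab: "\<bar>A R \<omega>\<bar> \<le> (\<Sum>k. U k * \<Lambda> k)" if "R > 0" for R \<omega>
    unfolding A_def by (rule series_bound(2)[OF termA[OF that] smUL])
  have intA: "integrable P (A R)" if "R > 0" for R
    by (rule Pp.integrable_const_bound[where B="\<Sum>k. U k * \<Lambda> k"]) (use Ab[OF that] in auto)
  have mL1: "(\<integral>\<omega>. \<bar>m R k j \<omega> - \<mu> k j\<bar> \<partial>P) \<le> 2 * b / sqrt R" if "R > 0" for R k j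
    unfolding m_def \<mu>_def P_def by (rule mean_L1_bound[OF Wp gm gabs that b0])
  have intd: "integrable P (\<lambda>\<omega>. \<bar>ln (m R k j \<omega>) - ln (\<mu> k j)\<bar>)" if "R > 0" for R k j
  proof (rule Pp.integrable_const_bound[where B="2 * \<Lambda> k"])
    show "AE x in P. norm \<bar>ln (m R k j x) - ln (\<mu> k j)\<bar> \<le> 2 * \<Lambda> k"
    proof (rule AE_I2)
      fix x show "norm \<bar>ln (m R k j x) - ln (\<mu> k j)\<bar> \<le> 2 * \<Lambda> k"
        using lnm[OF that, of k j x] ln\<mu>[of k j] by simp
    qed
  qed measurable
  have lnL1: "(\<integral>\<omega>. \<bar>ln (m R k j \<omega>) - ln (\<mu> k j)\<bar> \<partial>P) \<le> 2 * b / (a k * sqrt R)" if "R > 0" for R k j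
  proof -
    have "(\<integral>\<omega>. \<bar>ln (m R k j \<omega>) - ln (\<mu> k j)\<bar> \<partial>P) \<le> (\<integral>\<omega>. \<bar>m R k j \<omega> - \<mu> k j\<bar> / a k \<partial>P)"
    proof (rule integral_mono[OF intd[OF that]])
      show "integrable P (\<lambda>\<omega>. \<bar>m R k j \<omega> - \<mu> k j\<bar> / a k)"
      proof (rule Pp.integrable_const_bound[where B="2 * b / a k"])
        show "AE x in P. norm (\<bar>m R k j x - \<mu> k j\<bar> / a k) \<le> 2 * b / a k"
        proof (rule AE_I2)
          fix x
          have "\<bar>m R k j x - \<mu> k j\<bar> \<le> 2 * b"
            using mb[OF that, of k j x] \<mu>b[of k j] a0[of k] by linarith
          then show "norm (\<bar>m R k j x - \<mu> k j\<bar> / a k) \<le> 2 * b / a k"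
            using a0[of k] by (simp add: divide_right_mono)
        qed
      qed measurable
      show "\<bar>ln (m R k j \<omega>) - ln (\<mu> k j)\<bar> \<le> \<bar>m R k j \<omega> - \<mu> k j\<bar> / a k" for \<omega>
        by (rule ln_diff_bound[OF a0 mb(1)[OF that] \<mu>b(1)])
    qed
    also have "\<dots> = (\<integral>\<omega>. \<bar>m R k j \<omega> - \<mu> k j\<bar> \<partial>P) / a k" by simp
    also have "\<dots> \<le> (2 * b / sqrt R) / a k" using mL1[OF that] a0[of k] by (intro divide_right_mono) auto
    finally show ?thesis by (simp add: mult.commute)
  qed
  show ?thesis
    unfolding m_def[symmetric] \<mu>_def[symmetric] P_def[symmetric] A_def[symmetric] A0_def[symmetric]
  proof (rule LIMSEQ_I)
    fix \<epsilon> :: real assume e: "\<epsilon> > 0"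
    have sm2: "summable (\<lambda>k. 2 * (U k * \<Lambda> k))" using smUL by (rule summable_mult)
    obtain K where K: "\<forall>n\<ge>K. norm (\<Sum>i. 2 * (U (i + n) * \<Lambda> (i + n))) < \<epsilon> / 2"
      using suminf_exist_split[OF _ sm2, of "\<epsilon>/2"] e by auto
    define tail where "tail = (\<Sum>i. 2 * (U (i + K) * \<Lambda> (i + K)))"
    have tail: "tail < \<epsilon> / 2" using K unfolding tail_def by auto
    have smtail: "summable (\<lambda>i. 2 * (U (i + K) * \<Lambda> (i + K)))"
      using summable_ignore_initial_segment[OF sm2, of K] by simp
    define CK where "CK = (\<Sum>k<K. U k * (2 * b / a k))"
    have CK0: "CK \<ge> 0" unfolding CK_def using U0 b0 a0 by (intro sum_nonneg) (auto intro!: mult_nonneg_nonneg divide_nonneg_pos)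
    define R0 where "R0 = nat \<lceil>(2 * CK / \<epsilon>)\<^sup>2\<rceil> + 1"
    have R0: "CK / sqrt R < \<epsilon> / 2" if "R \<ge> R0" for R :: nat
    proof -
      have "(2 * CK / \<epsilon>)\<^sup>2 < R" using that unfolding R0_def by linarith
      then have "sqrt ((2 * CK / \<epsilon>)\<^sup>2) < sqrt R" by (rule real_sqrt_less_mono)
      then have "2 * CK / \<epsilon> < sqrt R" using CK0 e by simp
      then show ?thesis using e that R0_def by (simp add: field_simps)
    qed
    show "\<exists>no. \<forall>n\<ge>no. norm (integral\<^sup>L P (A n) - A0) < \<epsilon>"
    proof (intro exI allI impI)
      fix R assume RR: "R \<ge> R0"
      then have R: "R > 0" unfolding R0_def by linarith
      define d where "d \<omega> k = (\<Sum>j\<in>J k. u k j * (ln (m R k j \<omega>) - ln (\<mu> k j)))" for \<omega> k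
      have dA: "A R \<omega> - A0 = (\<Sum>k. d \<omega> k)" for \<omega>
        unfolding A_def A0_def d_def
        by (subst suminf_diff[OF smA[OF R] smA0]) (simp add: right_diff_distrib sum_subtractf)
      have dabs: "\<bar>d \<omega> k\<bar> \<le> 2 * (U k * \<Lambda> k)" for \<omega> k
      proof -
        have "d \<omega> k = (\<Sum>j\<in>J k. u k j * ln (m R k j \<omega>)) - (\<Sum>j\<in>J k. u k j * ln (\<mu> k j))"
          unfolding d_def by (simp add: right_diff_distrib sum_subtractf)
        then show ?thesis using termA[OF R, of k \<omega>] termA0[of k] by linarith
      qed
      have pw: "\<bar>A R \<omega> - A0\<bar> \<le> (\<Sum>k<K. \<Sum>j\<in>J k. u k j * \<bar>ln (m R k j \<omega>) - ln (\<mu> k j)\<bar>) + tail" for \<omega>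
      proof -
        have sd: "summable (d \<omega>)" by (rule series_bound(1)[OF dabs sm2])
        have "(\<Sum>k. d \<omega> k) = (\<Sum>i. d \<omega> (i + K)) + (\<Sum>k<K. d \<omega> k)"
          by (rule suminf_split_initial_segment[OF sd])
        moreover have "\<bar>\<Sum>i. d \<omega> (i + K)\<bar> \<le> tail"
          unfolding tail_def by (rule series_bound(2)[OF dabs smtail])
        moreover have "\<bar>\<Sum>k<K. d \<omega> k\<bar> \<le> (\<Sum>k<K. \<Sum>j\<in>J k. u k j * \<bar>ln (m R k j \<omega>) - ln (\<mu> k j)\<bar>)"
        proof -
          have "\<bar>\<Sum>k<K. d \<omega> k\<bar> \<le> (\<Sum>k<K. \<bar>d \<omega> k\<bar>)" by (rule sum_abs)
          also have "\<dots> \<le> (\<Sum>k<K. \<Sum>j\<in>J k. u k j * \<bar>ln (m R k j \<omega>) - ln (\<mu> k j)\<bar>)"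
          proof (rule sum_mono)
            fix k
            have "\<bar>d \<omega> k\<bar> \<le> (\<Sum>j\<in>J k. \<bar>u k j * (ln (m R k j \<omega>) - ln (\<mu> k j))\<bar>)"
              unfolding d_def by (rule sum_abs)
            also have "\<dots> = (\<Sum>j\<in>J k. u k j * \<bar>ln (m R k j \<omega>) - ln (\<mu> k j)\<bar>)"
              using u0 by (simp add: abs_mult)
            finally show "\<bar>d \<omega> k\<bar> \<le> (\<Sum>j\<in>J k. u k j * \<bar>ln (m R k j \<omega>) - ln (\<mu> k j)\<bar>)" .
          qed
          finally show ?thesis .
        qed
        ultimately show ?thesis using dA[of \<omega>] by linarith
      qed
      have intS: "integrable P (\<lambda>\<omega>. (\<Sum>k<K. \<Sum>j\<in>J k. u k j * \<bar>ln (m R k j \<omega>) - ln (\<mu> k j)\<bar>))"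
        using intd[OF R] by (intro Bochner_Integration.integrable_sum integrable_mult_right) auto
      have "norm (integral\<^sup>L P (A R) - A0) = \<bar>\<integral>\<omega>. A R \<omega> - A0 \<partial>P\<bar>"
        using intA[OF R] by (simp add: Pp.prob_space)
      also have "\<dots> \<le> (\<integral>\<omega>. \<bar>A R \<omega> - A0\<bar> \<partial>P)" by (rule integral_abs_bound)
      also have "\<dots> \<le> (\<integral>\<omega>. (\<Sum>k<K. \<Sum>j\<in>J k. u k j * \<bar>ln (m R k j \<omega>) - ln (\<mu> k j)\<bar>) + tail \<partial>P)"
        using intA[OF R] intS by (intro integral_mono pw) auto
      also have "\<dots> = (\<Sum>k<K. \<Sum>j\<in>J k. u k j * (\<integral>\<omega>. \<bar>ln (m R k j \<omega>) - ln (\<mu> k j)\<bar> \<partial>P)) + tail"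
        using intd[OF R] intS
        by (simp add: Pp.prob_space Bochner_Integration.integral_sum integrable_mult_right)
      also have "\<dots> \<le> (\<Sum>k<K. \<Sum>j\<in>J k. u k j * (2 * b / (a k * sqrt R))) + tail"
        using lnL1[OF R] u0 by (intro add_right_mono sum_mono mult_left_mono) auto
      also have "(\<Sum>k<K. \<Sum>j\<in>J k. u k j * (2 * b / (a k * sqrt R))) = CK / sqrt R"
        unfolding CK_def U_def by (simp add: sum_distrib_right sum_divide_distrib)
      also have "CK / sqrt R + tail < \<epsilon>" using R0[OF RR] tail by linarith
      finally show "norm (integral\<^sup>L P (A R) - A0) < \<epsilon>" .
    qed
  qed
qed



lemma Delta1_iff:
  "xi \<in> Delta1 \<longleftrightarrow> (\<forall>n. 0 \<le> xi n \<and> xi n \<le> 1) \<and> (\<forall>n. xi (Suc n) \<le> xi n) \<and> (\<Sum>n. ennreal (xi n)) = 1"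
proof
  assume "xi \<in> Delta1"
  then have a: "\<forall>n. 0 \<le> xi n \<and> xi n \<le> 1" "\<forall>n. xi (Suc n) \<le> xi n" "summable xi" "suminf xi = 1"
    by (auto simp: Delta1_def Delta_def)
  then have "(\<Sum>n. ennreal (xi n)) = ennreal (suminf xi)" by (intro suminf_ennreal2) auto
  with a show "(\<forall>n. 0 \<le> xi n \<and> xi n \<le> 1) \<and> (\<forall>n. xi (Suc n) \<le> xi n) \<and> (\<Sum>n. ennreal (xi n)) = 1" by simp
next
  assume a: "(\<forall>n. 0 \<le> xi n \<and> xi n \<le> 1) \<and> (\<forall>n. xi (Suc n) \<le> xi n) \<and> (\<Sum>n. ennreal (xi n)) = 1"
  then have s: "summable xi" by (intro summable_suminf_not_top) auto
  then have "(\<Sum>n. ennreal (xi n)) = ennreal (suminf xi)" using a by (intro suminf_ennreal2) auto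
  with a have "suminf xi = 1" using suminf_nonneg[OF s] by (metis ennreal_eq_1)
  with a s show "xi \<in> Delta1" by (auto simp: Delta1_def Delta_def)
qed

lemma space_Mxi[simp]: "space Mxi = UNIV"
  by (simp add: Mxi_def space_PiM)

lemma pred_Delta1[measurable]: "Measurable.pred Mxi (\<lambda>xi. xi \<in> Delta1)"
proof -
  have [measurable]: "(\<lambda>xi. xi n) \<in> borel_measurable Mxi" for n
    unfolding Mxi_def by measurable
  have [measurable]: "Measurable.pred Mxi (\<lambda>xi. xi (Suc n) \<le> xi n)" for n
    unfolding pred_def Mxi_def by (rule borel_measurable_le) measurable
  have m: "(\<lambda>xi. \<Sum>n. ennreal (xi n)) \<in> borel_measurable Mxi" by measurable
  have [measurable]: "Measurable.pred Mxi (\<lambda>xi. (\<Sum>n. ennreal (xi n)) = 1)"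
    by (rule pred_eq_const1[OF m]) (simp add: borel_closed)
  show ?thesis unfolding Delta1_iff by measurable
qed

lemma sets_wmeas[simp]: "sets (wmeas xi) = sets (count_space UNIV)"
  by (simp add: wmeas_def)

lemma space_wmeas[simp]: "space (wmeas xi) = UNIV"
  by (simp add: wmeas_def)

lemma measurable_wmeas[simp]: "measurable (wmeas xi) N = measurable (count_space UNIV) N"
  by (rule measurable_cong_sets) auto

lemma Delta1_nonneg: "xi \<in> Delta1 \<Longrightarrow> 0 \<le> xi n" by (auto simp: Delta1_def Delta_def)
lemma Delta1_summable: "xi \<in> Delta1 \<Longrightarrow> summable xi" by (auto simp: Delta1_def Delta_def)
lemma Delta1_sum: "xi \<in> Delta1 \<Longrightarrow> suminf xi = 1" by (auto simp: Delta1_def Delta_def)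

lemma prob_space_wmeas: assumes "xi \<in> Delta1" shows "prob_space (wmeas xi)"
proof
  have "emeasure (wmeas xi) (space (wmeas xi)) = (\<integral>\<^sup>+n. ennreal (xi n) \<partial>count_space UNIV)"
    by (simp add: wmeas_def emeasure_density)
  also have "\<dots> = (\<Sum>n. ennreal (xi n))" by (rule nn_integral_count_space_nat)
  also have "\<dots> = 1" using assms Delta1_iff by blast
  finally show "emeasure (wmeas xi) (space (wmeas xi)) = 1" .
qed

lemma integral_wmeas:
  fixes f :: "nat \<Rightarrow> real"
  assumes "xi \<in> Delta1" and "\<And>n. \<bar>f n\<bar> \<le> B"
  shows "integral\<^sup>L (wmeas xi) f = (\<Sum>n. xi n * f n)"
proof -
  have "integral\<^sup>L (wmeas xi) f = integral\<^sup>L (count_space UNIV) (\<lambda>n. xi n * f n)"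
    unfolding wmeas_def using Delta1_nonneg[OF assms(1)]
    by (subst integral_density) auto
  also have "\<dots> = (\<Sum>n. xi n * f n)"
  proof (rule integral_count_space_nat)
    have "summable (\<lambda>n. xi n * B)" using Delta1_summable[OF assms(1)] by (rule summable_mult2)
    moreover have "norm (norm (xi n * f n)) \<le> xi n * B" for n
      using assms Delta1_nonneg[OF assms(1), of n] by (simp add: abs_mult mult_left_mono)
    ultimately have "summable (\<lambda>n. norm (xi n * f n))"
      by (intro summable_comparison_test[of "\<lambda>n. norm (xi n * f n)" "\<lambda>n. xi n * B"]) auto
    then show "integrable (count_space UNIV) (\<lambda>n. xi n * f n)"
      by (simp add: integrable_count_space_nat_iff)
  qed
  finally show ?thesis .
qed



definition Mcol :: "nat \<Rightarrow> (nat \<Rightarrow> nat) measure" where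
  "Mcol q = PiM UNIV (\<lambda>_. count_space {1..q})"

lemma MT_Mcol: "MT q = PiM UNIV (\<lambda>_. Mcol q)" by (simp add: MT_def Mcol_def)

lemma space_Mcol: "space (Mcol q) = {\<tau>. \<forall>n. \<tau> n \<in> {1..q}}"
  by (auto simp: Mcol_def space_PiM PiE_def Pi_def)

lemma space_MT: "space (MT q) = {T. \<forall>a. T a \<in> space (Mcol q)}"
  by (auto simp: MT_Mcol space_PiM PiE_def Pi_def)

definition Kq :: "nat \<Rightarrow> ((nat \<Rightarrow> real) \<times> (nat \<Rightarrow> nat \<Rightarrow> nat)) \<Rightarrow> (nat \<Rightarrow> nat \<Rightarrow> nat) measure" where
  "Kq q = (\<lambda>(xi, T). if xi \<in> Delta1 then distr (PiM UNIV (\<lambda>_. wmeas xi)) (MT q) (\<lambda>r j. T (r j))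
      else return (MT q) (\<lambda>_ _. 1))"

lemma frakL_Kq: "frakL q L = bind L (Kq q)"
  by (simp add: frakL_def Kq_def)

lemma meas_map:
  assumes T: "T \<in> space (MT q)"
  shows "(\<lambda>r j. T (r j)) \<in> measurable (PiM UNIV (\<lambda>_. wmeas xi)) (MT q)"
  unfolding MT_Mcol
proof (rule measurable_PiM_single')
  fix j :: nat
  have "(\<lambda>\<alpha>. T \<alpha>) \<in> measurable (wmeas xi) (Mcol q)"
    using T by (simp add: space_MT measurable_count_space_eq1)
  moreover have "(\<lambda>r. r j) \<in> measurable (PiM UNIV (\<lambda>_. wmeas xi)) (wmeas xi)"
    using measurable_component_singleton[of j UNIV "\<lambda>_. wmeas xi"] by simp
  ultimately show "(\<lambda>r. T (r j)) \<in> measurable (PiM UNIV (\<lambda>_. wmeas xi)) (Mcol q)"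
    by (rule measurable_compose[rotated])
  show "(\<lambda>r j. T (r j)) \<in> space (Pi\<^sub>M UNIV (\<lambda>_. wmeas xi)) \<rightarrow> (\<Pi>\<^sub>E i\<in>UNIV. space (Mcol q))"
    using T by (auto simp: space_MT)
qed

lemma one_in_MT: "q \<ge> 1 \<Longrightarrow> (\<lambda>_ _. 1) \<in> space (MT q)"
  by (simp add: space_MT space_Mcol)

lemma Kq_sets: "sets (Kq q x) = sets (MT q)"
  by (cases x) (simp add: Kq_def)

lemma Kq_prob:
  assumes "q \<ge> 1" "x \<in> space (Mxi \<Otimes>\<^sub>M MT q)"
  shows "prob_space (Kq q x)"
proof -
  obtain xi T where x: "x = (xi, T)" by (cases x)
  have T: "T \<in> space (MT q)" using assms x by (simp add: space_pair_measure)
  show ?thesis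
  proof (cases "xi \<in> Delta1")
    case True
    interpret PP: product_prob_space "\<lambda>_::nat. wmeas xi" UNIV
      unfolding product_prob_space_def product_prob_space_axioms_def product_sigma_finite_def
      using prob_space_wmeas[OF True] by (auto intro: prob_space_imp_sigma_finite)
    show ?thesis using True x by (simp add: Kq_def PP.P.prob_space_distr meas_map[OF T])
  next
    case False
    then show ?thesis using x one_in_MT[OF assms(1)] by (simp add: Kq_def prob_space_return)
  qed
qed


lemma Kq_emeasure_cyl:
  assumes T: "T \<in> space (MT q)" and xi: "xi \<in> Delta1" and J: "finite J"
    and X: "\<And>j. j \<in> J \<Longrightarrow> X j \<in> sets (Mcol q)"
  shows "emeasure (Kq q (xi, T)) (prod_emb UNIV (\<lambda>_. Mcol q) J (Pi\<^sub>E J X))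
    = (\<Prod>j\<in>J. \<Sum>\<alpha>. ennreal (xi \<alpha>) * indicator (X j) (T \<alpha>))"
proof -
  interpret PP: product_prob_space "\<lambda>_::nat. wmeas xi" UNIV
    unfolding product_prob_space_def product_prob_space_axioms_def product_sigma_finite_def
    using prob_space_wmeas[OF xi] by (auto intro: prob_space_imp_sigma_finite)
  have A: "prod_emb UNIV (\<lambda>_. Mcol q) J (Pi\<^sub>E J X) \<in> sets (MT q)"
    unfolding MT_Mcol using J X by (intro sets_PiM_I) auto
  have pre: "(\<lambda>r j. T (r j)) -` prod_emb UNIV (\<lambda>_. Mcol q) J (Pi\<^sub>E J X) \<inter> space (PiM UNIV (\<lambda>_. wmeas xi))
      = {\<rho> \<in> space (PiM UNIV (\<lambda>_. wmeas xi)). \<forall>j\<in>J. \<rho> j \<in> {\<alpha>. T \<alpha> \<in> X j}}"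
    using T by (auto simp: prod_emb_def space_MT PiE_iff space_PiM)
  have "emeasure (Kq q (xi, T)) (prod_emb UNIV (\<lambda>_. Mcol q) J (Pi\<^sub>E J X))
      = emeasure (PiM UNIV (\<lambda>_. wmeas xi)) {\<rho> \<in> space (PiM UNIV (\<lambda>_. wmeas xi)). \<forall>j\<in>J. \<rho> j \<in> {\<alpha>. T \<alpha> \<in> X j}}"
    using xi by (simp add: Kq_def emeasure_distr[OF meas_map[OF T] A] pre)
  also have "\<dots> = (\<Prod>j\<in>J. emeasure (wmeas xi) {\<alpha>. T \<alpha> \<in> X j})"
    using J by (intro PP.emeasure_PiM_Collect) auto
  also have "\<dots> = (\<Prod>j\<in>J. \<Sum>\<alpha>. ennreal (xi \<alpha>) * indicator (X j) (T \<alpha>))"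
  proof (rule prod.cong[OF refl])
    fix j
    have "emeasure (wmeas xi) {\<alpha>. T \<alpha> \<in> X j} = (\<integral>\<^sup>+\<alpha>. ennreal (xi \<alpha>) * indicator {\<alpha>. T \<alpha> \<in> X j} \<alpha> \<partial>count_space UNIV)"
      unfolding wmeas_def by (rule emeasure_density) auto
    also have "\<dots> = (\<Sum>\<alpha>. ennreal (xi \<alpha>) * indicator (X j) (T \<alpha>))"
      by (subst nn_integral_count_space_nat) (simp add: indicator_def)
    finally show "emeasure (wmeas xi) {\<alpha>. T \<alpha> \<in> X j} = (\<Sum>\<alpha>. ennreal (xi \<alpha>) * indicator (X j) (T \<alpha>))" .
  qed
  finally show ?thesis .
qed

lemma Kq_meas:
  assumes q: "q \<ge> 1"
  shows "Kq q \<in> measurable (Mxi \<Otimes>\<^sub>M MT q) (subprob_algebra (MT q))"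
proof (rule measurable_prob_algebraD, rule measurable_prob_algebra_generated)
  show "sets (MT q) = sigma_sets (\<Pi>\<^sub>E i\<in>UNIV. space (Mcol q)) (prod_algebra UNIV (\<lambda>_. Mcol q))"
    unfolding MT_Mcol by (rule sets_PiM)
  show "Int_stable (prod_algebra UNIV (\<lambda>_. Mcol q))" by (rule Int_stable_prod_algebra)
  show "prod_algebra UNIV (\<lambda>_. Mcol q) \<subseteq> Pow (\<Pi>\<^sub>E i\<in>UNIV. space (Mcol q))"
    by (rule prod_algebra_sets_into_space)
  show "\<And>a. a \<in> space (Mxi \<Otimes>\<^sub>M MT q) \<Longrightarrow> prob_space (Kq q a)" by (rule Kq_prob[OF q])
  show "\<And>a. a \<in> space (Mxi \<Otimes>\<^sub>M MT q) \<Longrightarrow> sets (Kq q a) = sets (MT q)" by (rule Kq_sets)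
  fix A :: "(nat \<Rightarrow> nat \<Rightarrow> nat) set" assume "A \<in> prod_algebra UNIV (\<lambda>_. Mcol q)"
  then obtain J X where A: "A = prod_emb UNIV (\<lambda>_. Mcol q) J (Pi\<^sub>E J X)" and J: "finite J"
    and X: "\<And>j. j \<in> J \<Longrightarrow> X j \<in> sets (Mcol q)"
    by (auto elim!: prod_algebraE)
  define E where "E x = (if fst x \<in> Delta1 then (\<Prod>j\<in>J. \<Sum>\<alpha>. ennreal (fst x \<alpha>) * indicator (X j) (snd x \<alpha>))
      else indicator A (\<lambda>_ _. 1::nat))" for x :: "(nat \<Rightarrow> real) \<times> (nat \<Rightarrow> nat \<Rightarrow> nat)"
  have "E \<in> borel_measurable (Mxi \<Otimes>\<^sub>M MT q)"
  proof -
    have c1[measurable]: "(\<lambda>x. snd x \<alpha>) \<in> measurable (Mxi \<Otimes>\<^sub>M MT q) (Mcol q)" for \<alpha>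
      unfolding MT_Mcol by measurable
    have c2[measurable]: "(\<lambda>x. fst x \<alpha>) \<in> borel_measurable (Mxi \<Otimes>\<^sub>M MT q)" for \<alpha>
      unfolding Mxi_def by measurable
    have c3[measurable]: "(\<lambda>x. indicator (X j) (snd x \<alpha>) :: ennreal) \<in> borel_measurable (Mxi \<Otimes>\<^sub>M MT q)" if "j \<in> J" for \<alpha> j
      by (rule measurable_compose[OF c1 borel_measurable_indicator[OF X[OF that]]])
    have c4: "Measurable.pred (Mxi \<Otimes>\<^sub>M MT q) (\<lambda>x. fst x \<in> Delta1)" by measurable
    show ?thesis unfolding E_def
    proof (intro measurable_If c4 borel_measurable_prod_ennreal borel_measurable_suminf_order
          borel_measurable_times_ennreal borel_measurable_const)
      fix i \<alpha> assume "i \<in> J"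
      show "(\<lambda>x. indicator (X i) (snd x \<alpha>) :: ennreal) \<in> borel_measurable (Mxi \<Otimes>\<^sub>M MT q)"
        by (rule c3[OF \<open>i \<in> J\<close>])
      show "(\<lambda>x. ennreal (fst x \<alpha>)) \<in> borel_measurable (Mxi \<Otimes>\<^sub>M MT q)" by measurable
    qed (use c4 in \<open>simp add: pred_def\<close>)
  qed
  moreover have "emeasure (Kq q x) A = E x" if x: "x \<in> space (Mxi \<Otimes>\<^sub>M MT q)" for x
  proof -
    obtain xi T where xT: "x = (xi, T)" by (cases x)
    have T: "T \<in> space (MT q)" using x xT by (simp add: space_pair_measure)
    have Am: "A \<in> sets (MT q)" unfolding A MT_Mcol using J X by (intro sets_PiM_I) auto
    show ?thesis
    proof (cases "xi \<in> Delta1")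
      case True
      then show ?thesis using Kq_emeasure_cyl[OF T True J X] by (simp add: A E_def xT)
    next
      case False
      then show ?thesis using Am by (simp add: E_def xT Kq_def)
    qed
  qed
  ultimately show "(\<lambda>a. emeasure (Kq q a) A) \<in> borel_measurable (Mxi \<Otimes>\<^sub>M MT q)"
    by (subst measurable_cong) auto
qed



lemma assembly:
  fixes fR :: "nat \<Rightarrow> (nat \<Rightarrow> nat \<Rightarrow> nat) \<Rightarrow> real"
    and F :: "(nat \<Rightarrow> real) \<times> (nat \<Rightarrow> nat \<Rightarrow> nat) \<Rightarrow> real"
  assumes q: "q \<ge> 1" and L: "L \<in> S_laws q"
    and fRm: "\<And>R. fR R \<in> borel_measurable (MT q)"
    and fRb: "\<And>R T'. \<bar>fR R T'\<bar> \<le> C"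
    and Fm: "F \<in> borel_measurable (Mxi \<Otimes>\<^sub>M MT q)"
    and lim: "\<And>xi T. xi \<in> Delta1 \<Longrightarrow> T \<in> space (MT q) \<Longrightarrow>
       (\<lambda>R. \<integral>\<rho>. fR R (\<lambda>j. T (\<rho> j)) \<partial>PiM UNIV (\<lambda>_. wmeas xi)) \<longlonglongrightarrow> F (xi, T)"
  shows "(\<lambda>R. \<integral>T'. fR R T' \<partial>frakL q L) \<longlonglongrightarrow> (\<integral>x. F x \<partial>L)"
proof -
  have Lp: "prob_space L" and Ls: "sets L = sets (Mxi \<Otimes>\<^sub>M MT q)"
    and L1: "emeasure L {x \<in> space L. fst x \<in> Delta1} = 1"
    using L by (auto simp: S_laws_def)
  interpret Lp: prob_space L by (rule Lp)
  have Lsp: "space L = space (Mxi \<Otimes>\<^sub>M MT q)" using Ls by (rule sets_eq_imp_space_eq)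
  have Km: "Kq q \<in> measurable L (subprob_algebra (MT q))"
    using Kq_meas[OF q] by (simp add: measurable_cong_sets[OF Ls refl])
  have C0: "0 \<le> C" using fRb[of 0 undefined] by linarith
  have Kp: "prob_space (Kq q x)" if "x \<in> space L" for x using Kq_prob[OF q] that Lsp by simp
  have s_eq: "(\<integral>T'. fR R T' \<partial>frakL q L) = (\<integral>x. (\<integral>T'. fR R T' \<partial>Kq q x) \<partial>L)" for R
    unfolding frakL_Kq
  proof (rule integral_bind[OF fRm _ Km])
    show "\<And>x. x \<in> space (MT q) \<Longrightarrow> \<bar>fR R x\<bar> \<le> C" using fRb by auto
    show "finite_measure L" by (rule Lp.finite_measure_axioms)
    show "AE x in L. emeasure (Kq q x) (space (Kq q x)) \<le> ennreal 1"
      using Kp by (auto intro!: AE_I2 simp: prob_space.emeasure_space_1)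
  qed
  have sm: "(\<lambda>x. \<integral>T'. fR R T' \<partial>Kq q x) \<in> borel_measurable L" for R
    using measurable_compose[OF Km integral_measurable_subprob_algebra[OF fRm]] .
  have sb: "norm (\<integral>T'. fR R T' \<partial>Kq q x) \<le> C" if x: "x \<in> space L" for R x
  proof -
    interpret K: prob_space "Kq q x" by (rule Kp[OF x])
    have fm: "fR R \<in> borel_measurable (Kq q x)"
      using fRm[of R] by (simp add: measurable_cong_sets[OF Kq_sets refl])
    have "norm (\<integral>T'. fR R T' \<partial>Kq q x) \<le> (\<integral>T'. norm (fR R T') \<partial>Kq q x)" by (rule integral_norm_bound)
    also have "\<dots> \<le> (\<integral>T'. C \<partial>Kq q x)"
      using fRb fm C0 by (intro integral_mono K.integrable_const_bound[where B=C]) auto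
    also have "\<dots> = C" by (simp add: K.prob_space)
    finally show ?thesis .
  qed
  have AED: "AE x in L. fst x \<in> Delta1"
  proof -
    have S: "{x \<in> space L. fst x \<in> Delta1} \<in> sets L"
    proof -
      have "Measurable.pred (Mxi \<Otimes>\<^sub>M MT q) (\<lambda>x. fst x \<in> Delta1)" by measurable
      then show ?thesis using Ls Lsp by (simp add: pred_def)
    qed
    have "AE x in L. x \<in> {x \<in> space L. fst x \<in> Delta1}"
      using L1 S by (intro Lp.AE_prob_1) (simp add: Lp.emeasure_eq_measure)
    then show ?thesis by auto
  qed
  have "(\<lambda>R. \<integral>x. (\<integral>T'. fR R T' \<partial>Kq q x) \<partial>L) \<longlonglongrightarrow> (\<integral>x. F x \<partial>L)"
  proof (rule integral_dominated_convergence[where w="\<lambda>_. C"])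
    show "F \<in> borel_measurable L" using Fm by (simp add: measurable_cong_sets[OF Ls refl])
    show "\<And>R. (\<lambda>x. \<integral>T'. fR R T' \<partial>Kq q x) \<in> borel_measurable L" by (rule sm)
    show "integrable L (\<lambda>_. C)" by simp
    show "\<And>R. AE x in L. norm (\<integral>T'. fR R T' \<partial>Kq q x) \<le> C" using sb by auto
    show "AE x in L. (\<lambda>R. \<integral>T'. fR R T' \<partial>Kq q x) \<longlonglongrightarrow> F x"
      using AED
    proof (rule AE_mp, intro AE_I2 impI)
      fix x assume x: "x \<in> space L" and D: "fst x \<in> Delta1"
      obtain xi T where xT: "x = (xi, T)" by (cases x)
      have T: "T \<in> space (MT q)" using x xT Lsp by (simp add: space_pair_measure)
      have eq: "(\<integral>T'. fR R T' \<partial>Kq q x) = (\<integral>\<rho>. fR R (\<lambda>j. T (\<rho> j)) \<partial>PiM UNIV (\<lambda>_. wmeas xi))" for R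
        using D xT by (simp add: Kq_def integral_distr[OF meas_map[OF T] fRm])
      show "(\<lambda>R. \<integral>T'. fR R T' \<partial>Kq q x) \<longlonglongrightarrow> F x"
      proof -
        have "(\<lambda>R. \<integral>T'. fR R T' \<partial>Kq q x) = (\<lambda>R. \<integral>\<rho>. fR R (\<lambda>j. T (\<rho> j)) \<partial>PiM UNIV (\<lambda>_. wmeas xi))"
          using eq by (rule ext)
        then show ?thesis using lim[of xi T] D T xT by simp
      qed
    qed
  qed
  then show ?thesis unfolding s_eq .
qed



lemma pois_nonneg: "lam \<ge> 0 \<Longrightarrow> pois lam k \<ge> 0" by (simp add: pois_def)

lemma pois_summable: assumes "lam \<ge> 0" shows "summable (\<lambda>k. pois lam k)"
proof -
  have "summable (\<lambda>k. exp (- lam) * (inverse (fact k) * lam ^ k))"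
    by (intro summable_mult summable_exp)
  then show ?thesis by (simp add: pois_def divide_inverse mult_ac)
qed

lemma pois_k_summable: assumes l: "lam \<ge> 0" shows "summable (\<lambda>k. pois lam k * real k)"
proof (rule summable_comparison_test[where g="\<lambda>k. exp lam * pois (2 * lam) k"])
  show "\<exists>N. \<forall>n\<ge>N. norm (pois lam n * real n) \<le> exp lam * pois (2 * lam) n"
  proof (intro exI allI impI)
    fix n :: nat
    have kn: "real n \<le> 2 ^ n" using less_exp[of n] by (simp add: of_nat_le_iff[symmetric])
    have "pois lam n * real n = exp (- lam) * (lam ^ n * real n) / fact n" by (simp add: pois_def)
    also have "\<dots> \<le> exp (- lam) * (lam ^ n * 2 ^ n) / fact n"
      using l kn by (intro divide_right_mono mult_left_mono) auto
    also have "\<dots> = exp lam * pois (2 * lam) n"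
      by (simp add: pois_def power_mult_distrib exp_minus field_simps)
          (simp add: exp_add[symmetric])
    finally show "norm (pois lam n * real n) \<le> exp lam * pois (2 * lam) n"
      using l by (simp add: pois_def)
  qed
  show "summable (\<lambda>k. exp lam * pois (2 * lam) k)" using l by (intro summable_mult pois_summable) auto
qed

lemma kdelta_01: "0 \<le> kdelta a b" "kdelta a b \<le> 1" by (auto simp: kdelta_def)

lemma Htil_bounds: "0 \<le> Htil k I \<tau> \<sigma>" "Htil k I \<tau> \<sigma> \<le> real k"
proof -
  show "0 \<le> Htil k I \<tau> \<sigma>" unfolding Htil_def by (intro sum_nonneg) (simp add: kdelta_01)
  have "Htil k I \<tau> \<sigma> \<le> (\<Sum>i<k. 1)" unfolding Htil_def by (intro sum_mono) (simp add: kdelta_01)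
  then show "Htil k I \<tau> \<sigma> \<le> real k" by simp
qed

lemma Hpair_bounds: "0 \<le> Hpair k \<tau>" "Hpair k \<tau> \<le> real k"
proof -
  show "0 \<le> Hpair k \<tau>" unfolding Hpair_def by (intro sum_nonneg) (simp add: kdelta_01)
  have "Hpair k \<tau> \<le> (\<Sum>i<k. 1)" unfolding Hpair_def by (intro sum_mono) (simp add: kdelta_01)
  then show "Hpair k \<tau> \<le> real k" by simp
qed

lemma exp_bounds:
  assumes "beta \<ge> 0" "0 \<le> h" "h \<le> real k"
  shows "exp (- beta * real k) \<le> exp (- beta * h)" "exp (- beta * h) \<le> 1"
  using assms by (auto intro: mult_left_mono simp: mult_nonneg_nonneg)

lemma card_spins: "card (spins q N) = q ^ N" "finite (spins q N)"
  by (simp_all add: spins_def card_PiE finite_PiE)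

lemma spins_ne: "q \<ge> 1 \<Longrightarrow> spins q N \<noteq> {}"
  by (auto simp: spins_def PiE_eq_empty_iff)

lemma Zsite_bounds:
  assumes q: "q \<ge> 1" and b: "beta \<ge> 0"
  shows "exp (- beta * real k) \<le> Zsite q N beta k I \<tau>" "Zsite q N beta k I \<tau> \<le> real q ^ N"
proof -
  have "(\<Sum>sg\<in>spins q N. exp (- beta * real k)) \<le> Zsite q N beta k I \<tau>"
    unfolding Zsite_def using b by (intro sum_mono exp_bounds Htil_bounds)
  moreover have "exp (- beta * real k) \<le> (\<Sum>sg\<in>spins q N. exp (- beta * real k))"
  proof -
    have "card (spins q N) \<ge> 1" using card_spins spins_ne[OF q]
      by (metis One_nat_def Suc_leI card_gt_0_iff)
    then have "1 * exp (- beta * real k) \<le> real (card (spins q N)) * exp (- beta * real k)"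
      by (intro mult_right_mono) auto
    then show ?thesis by simp
  qed
  ultimately show "exp (- beta * real k) \<le> Zsite q N beta k I \<tau>" by linarith
  have "Zsite q N beta k I \<tau> \<le> (\<Sum>sg\<in>spins q N. 1)"
    unfolding Zsite_def using b by (intro sum_mono exp_bounds(2)[where k=k] Htil_bounds)
  then show "Zsite q N beta k I \<tau> \<le> real q ^ N" by (simp add: card_spins)
qed

lemma A_bound_gen:
  fixes J :: "nat \<Rightarrow> 'j set" and u :: "nat \<Rightarrow> 'j \<Rightarrow> real" and x :: "nat \<Rightarrow> 'j \<Rightarrow> real" and a :: "nat \<Rightarrow> real" and b :: real
  assumes u0: "\<And>k j. u k j \<ge> 0" and a0: "\<And>k. a k > 0"
    and xb: "\<And>k j. x k j = 0 \<or> (a k \<le> x k j \<and> x k j \<le> b)"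
    and sm: "summable (\<lambda>k. (\<Sum>j\<in>J k. u k j) * (\<bar>ln (a k)\<bar> + \<bar>ln b\<bar>))"
  shows "\<bar>\<Sum>k. \<Sum>j\<in>J k. u k j * ln (x k j)\<bar> \<le> (\<Sum>k. (\<Sum>j\<in>J k. u k j) * (\<bar>ln (a k)\<bar> + \<bar>ln b\<bar>))"
proof (rule series_bound(2)[OF _ sm])
  fix k
  show "\<bar>\<Sum>j\<in>J k. u k j * ln (x k j)\<bar> \<le> (\<Sum>j\<in>J k. u k j) * (\<bar>ln (a k)\<bar> + \<bar>ln b\<bar>)"
  proof (rule finsum_ln_bound)
    fix j
    show "\<bar>ln (x k j)\<bar> \<le> \<bar>ln (a k)\<bar> + \<bar>ln b\<bar>"
      using xb[of k j] ln_abs_bound[OF a0, where x="x k j" and b=b] by auto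
  qed (use u0 in auto)
qed



lemma col_meas[measurable]: "(\<lambda>T. T r i) \<in> measurable (MT q) (count_space {1..q})"
proof -
  have "(\<lambda>T. T r) \<in> measurable (MT q) (Mcol q)"
    unfolding MT_Mcol by (rule measurable_component_singleton) simp
  moreover have "(\<lambda>t. t i) \<in> measurable (Mcol q) (count_space {1..q})"
    unfolding Mcol_def by (rule measurable_component_singleton) simp
  ultimately show ?thesis by (rule measurable_compose)
qed

lemma col_measU[measurable]: "(\<lambda>T. T r i) \<in> measurable (MT q) (count_space UNIV)"
proof -
  have "(\<lambda>x::nat. x) \<in> measurable (count_space {1..q}) (count_space UNIV)" by simp
  from measurable_compose[OF col_meas this] show ?thesis .
qed

lemma col_measU2[measurable]: "(\<lambda>x. snd x r i) \<in> measurable (Mxi \<Otimes>\<^sub>M MT q) (count_space UNIV)"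
  using measurable_compose[OF measurable_snd col_measU] by simp

lemma col_meas2[measurable]: "(\<lambda>x. snd x r i) \<in> measurable (Mxi \<Otimes>\<^sub>M MT q) (count_space {1..q})"
  using measurable_compose[OF measurable_snd col_meas] by simp

lemma fR1_meas: "(\<lambda>T'. EI N c (\<lambda>k I. (1 / real N) * ln (\<Sum>r<R. (1 / real R) * Zsite q N beta k I (T' r))))
   \<in> borel_measurable (MT q)"
  unfolding EI_def Zsite_def Htil_def kdelta_def by measurable

lemma F1_meas: "(\<lambda>x. case x of (xi, T) \<Rightarrow> EI N c (\<lambda>k I. (1 / real N) * ln (\<Sum>a. xi a * Zsite q N beta k I (T a))))
   \<in> borel_measurable (Mxi \<Otimes>\<^sub>M MT q)"
proof -
  have [measurable]: "(\<lambda>x. fst x a) \<in> borel_measurable (Mxi \<Otimes>\<^sub>M MT q)" for a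
    unfolding Mxi_def by measurable
  show ?thesis unfolding EI_def Zsite_def Htil_def kdelta_def case_prod_beta by measurable
qed

lemma fR2_meas: "(\<lambda>T'. \<Sum>K. pois (c * real N / 2) K / real N *
             ln (\<Sum>r<R. (1 / real R) * exp (- beta * Hpair K (T' r)))) \<in> borel_measurable (MT q)"
  unfolding Hpair_def kdelta_def by measurable

lemma F2_meas: "(\<lambda>x. case x of (xi, T) \<Rightarrow> (\<Sum>K. pois (c * real N / 2) K / real N *
             ln (\<Sum>a. xi a * exp (- beta * Hpair K (T a))))) \<in> borel_measurable (Mxi \<Otimes>\<^sub>M MT q)"
proof -
  have [measurable]: "(\<lambda>x. fst x a) \<in> borel_measurable (Mxi \<Otimes>\<^sub>M MT q)" for a
    unfolding Mxi_def by measurable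
  have "(\<lambda>T. exp (- beta * Hpair K (T a))) \<in> borel_measurable (MT q)" for K a
    unfolding Hpair_def kdelta_def by measurable
  from measurable_compose[OF measurable_snd this]
  have [measurable]: "(\<lambda>x. exp (- beta * Hpair K (snd x a))) \<in> borel_measurable (Mxi \<Otimes>\<^sub>M MT q)" for K a .
  show ?thesis unfolding case_prod_beta by measurable
qed



lemma EI_rewrite:
  "EI N c (\<lambda>k I. (1 / real N) * ln (X k I)) =
   (\<Sum>k. \<Sum>I\<in>PiE {..<k} (\<lambda>_. {1..N}). pois (c * real N) k / real N ^ k / real N * ln (X k I))"
  unfolding EI_def
  by (rule arg_cong[where f=suminf], rule ext)
     (simp add: sum_distrib_left sum_divide_distrib[symmetric] mult.assoc)

lemma U1:
  assumes "N \<ge> 1"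
  shows "(\<Sum>I\<in>PiE {..<k} (\<lambda>_. {1..N}). pois (c * real N) k / real N ^ k / real N) = pois (c * real N) k / real N"
proof -
  have "card (PiE {..<k} (\<lambda>_::nat. {1..N})) = N ^ k" by (simp add: card_PiE)
  then show ?thesis using assms by simp
qed

lemma sm1:
  assumes N: "N \<ge> 1" and q: "q \<ge> 1" and b: "beta \<ge> 0" and c: "c \<ge> 0"
  shows "summable (\<lambda>k. (\<Sum>I\<in>PiE {..<k} (\<lambda>_. {1..N}). pois (c * real N) k / real N ^ k / real N)
           * (\<bar>ln (exp (- beta * real k))\<bar> + \<bar>ln (real q ^ N)\<bar>))"
proof -
  have lq: "ln (real q ^ N) \<ge> 0" using q by simp
  have eq: "(\<Sum>I\<in>PiE {..<k} (\<lambda>_. {1..N}). pois (c * real N) k / real N ^ k / real N)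
           * (\<bar>ln (exp (- beta * real k))\<bar> + \<bar>ln (real q ^ N)\<bar>)
      = (beta / real N) * (pois (c * real N) k * real k) + (ln (real q ^ N) / real N) * pois (c * real N) k" for k
    unfolding U1[OF N] using b lq N by (simp add: field_simps)
  have cN: "c * real N \<ge> 0" using c by simp
  show ?thesis unfolding eq
    by (intro summable_add summable_mult pois_k_summable pois_summable cN)
qed

theorem G1_conv:
  assumes q: "q \<ge> 1" and N: "N \<ge> 1" and b0: "beta \<ge> 0" and c0: "c \<ge> 0" and L: "L \<in> S_laws q"
  shows "(\<lambda>R. G1R q N R beta c (frakL q L)) \<longlonglongrightarrow> G1 q N beta c L"
proof -
  define J where "J k = PiE {..<k} (\<lambda>_::nat. {1..N})" for k
  define u where "u k I = pois (c * real N) k / real N ^ k / real N" for k and I :: "nat \<Rightarrow> nat"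
  define a where "a k = exp (- beta * real k)" for k
  define b where "b = real q ^ N"
  define C where "C = (\<Sum>k. (\<Sum>I\<in>J k. u k I) * (\<bar>ln (a k)\<bar> + \<bar>ln b\<bar>))"
  have sm: "summable (\<lambda>k. (\<Sum>I\<in>J k. u k I) * (\<bar>ln (a k)\<bar> + \<bar>ln b\<bar>))"
    unfolding J_def u_def a_def b_def by (rule sm1[OF N q b0 c0])
  have u0: "u k I \<ge> 0" for k I unfolding u_def using c0 by (simp add: pois_nonneg)
  have a0: "a k > 0" for k unfolding a_def by simp
  have Zb: "a k \<le> Zsite q N beta k I \<tau>" "Zsite q N beta k I \<tau> \<le> b" for k I \<tau>
    unfolding a_def b_def using Zsite_bounds[OF q b0] by auto
  have finJ: "finite (J k)" for k unfolding J_def by (simp add: finite_PiE)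
  have rw: "EI N c (\<lambda>k I. (1 / real N) * ln (X k I)) = (\<Sum>k. \<Sum>I\<in>J k. u k I * ln (X k I))" for X
    unfolding J_def u_def by (rule EI_rewrite)
  have "(\<lambda>R. \<integral>T'. EI N c (\<lambda>k I. (1 / real N) * ln (\<Sum>r<R. (1 / real R) * Zsite q N beta k I (T' r))) \<partial>frakL q L)
     \<longlonglongrightarrow> (\<integral>x. (case x of (xi, T) \<Rightarrow> EI N c (\<lambda>k I. (1 / real N) * ln (\<Sum>a. xi a * Zsite q N beta k I (T a)))) \<partial>L)"
  proof (rule assembly[OF q L fR1_meas _ F1_meas, where C=C])
    fix R T'
    show "\<bar>EI N c (\<lambda>k I. 1 / real N * ln (\<Sum>r<R. 1 / real R * Zsite q N beta k I (T' r)))\<bar> \<le> C"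
      unfolding rw C_def
    proof (rule A_bound_gen[OF u0 a0 _ sm])
      fix k I
      show "(\<Sum>r<R. 1 / real R * Zsite q N beta k I (T' r)) = 0 \<or>
         (a k \<le> (\<Sum>r<R. 1 / real R * Zsite q N beta k I (T' r)) \<and> (\<Sum>r<R. 1 / real R * Zsite q N beta k I (T' r)) \<le> b)"
      proof (cases "R = 0")
        case False
        then show ?thesis using mean_bounds[of R "a k" "\<lambda>r. Zsite q N beta k I (T' r)" b] Zb by auto
      qed simp
    qed
  next
    fix xi T assume xi: "xi \<in> Delta1" and T: "T \<in> space (MT q)"
    define \<gamma> where "\<gamma> k I \<alpha> = Zsite q N beta k I (T \<alpha>)" for k I \<alpha>
    have Wp: "prob_space (wmeas xi)" by (rule prob_space_wmeas[OF xi])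
    have lim: "(\<lambda>R. \<integral>\<rho>. (\<Sum>k. \<Sum>I\<in>J k. u k I * ln (\<Sum>r<R. (1 / real R) * \<gamma> k I (\<rho> r))) \<partial>PiM UNIV (\<lambda>_. wmeas xi))
     \<longlonglongrightarrow> (\<Sum>k. \<Sum>I\<in>J k. u k I * ln (integral\<^sup>L (wmeas xi) (\<gamma> k I)))"
      by (rule inner_conv[OF Wp _ finJ u0 a0 _ _ sm]) (auto simp: \<gamma>_def Zb)
    have ig: "integral\<^sup>L (wmeas xi) (\<gamma> k I) = (\<Sum>\<alpha>. xi \<alpha> * Zsite q N beta k I (T \<alpha>))" for k I
    proof -
      have "\<bar>\<gamma> k I \<alpha>\<bar> \<le> b" for \<alpha> using Zb[of k I "T \<alpha>"] a0[of k] unfolding \<gamma>_def by linarith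
      then show ?thesis unfolding \<gamma>_def by (rule integral_wmeas[OF xi])
    qed
    show "(\<lambda>R. \<integral>\<rho>. EI N c (\<lambda>k I. 1 / real N * ln (\<Sum>r<R. 1 / real R * Zsite q N beta k I (T (\<rho> r))))
          \<partial>PiM UNIV (\<lambda>_. wmeas xi))
      \<longlonglongrightarrow> (case (xi, T) of (xi, T) \<Rightarrow> EI N c (\<lambda>k I. 1 / real N * ln (\<Sum>a. xi a * Zsite q N beta k I (T a))))"
      using lim unfolding rw ig \<gamma>_def by simp
  qed
  then show ?thesis unfolding G1R_def G1_def .
qed


theorem G2_conv:
  assumes q: "q \<ge> 1" and N: "N \<ge> 1" and b0: "beta \<ge> 0" and c0: "c \<ge> 0" and L: "L \<in> S_laws q"
  shows "(\<lambda>R. G2R N R beta c (frakL q L)) \<longlonglongrightarrow> G2 N beta c L"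
proof -
  define J where "J k = {()}" for k :: nat
  define u where "u k (j::unit) = pois (c * real N / 2) k / real N" for k j
  define a where "a k = exp (- beta * real k)" for k
  define b where "b = (1::real)"
  define C where "C = (\<Sum>k. (\<Sum>I\<in>J k. u k I) * (\<bar>ln (a k)\<bar> + \<bar>ln b\<bar>))"
  have sm: "summable (\<lambda>k. (\<Sum>I\<in>J k. u k I) * (\<bar>ln (a k)\<bar> + \<bar>ln b\<bar>))"
  proof -
    have eq: "(\<Sum>I\<in>J k. u k I) * (\<bar>ln (a k)\<bar> + \<bar>ln b\<bar>) = (beta / real N) * (pois (c * real N / 2) k * real k)" for k
      unfolding J_def u_def a_def b_def using b0 by simp
    have cN: "c * real N / 2 \<ge> 0" using c0 by simp
    show ?thesis unfolding eq by (intro summable_mult pois_k_summable cN)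
  qed
  have u0: "u k I \<ge> 0" for k I unfolding u_def using c0 by (simp add: pois_nonneg)
  have a0: "a k > 0" for k unfolding a_def by simp
  have Zb: "a k \<le> exp (- beta * Hpair k \<tau>)" "exp (- beta * Hpair k \<tau>) \<le> b" for k \<tau>
    unfolding a_def b_def using exp_bounds[OF b0 Hpair_bounds] by auto
  have finJ: "finite (J k)" for k unfolding J_def by simp
  have rw: "(\<Sum>K. pois (c * real N / 2) K / real N * ln (X K)) = (\<Sum>k. \<Sum>I\<in>J k. u k I * ln (X k))" for X
    unfolding J_def u_def by simp
  have "(\<lambda>R. \<integral>T'. (\<Sum>K. pois (c * real N / 2) K / real N *
             ln (\<Sum>r<R. (1 / real R) * exp (- beta * Hpair K (T' r)))) \<partial>frakL q L)
     \<longlonglongrightarrow> (\<integral>x. (case x of (xi, T) \<Rightarrow> (\<Sum>K. pois (c * real N / 2) K / real N *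
             ln (\<Sum>a. xi a * exp (- beta * Hpair K (T a))))) \<partial>L)"
  proof (rule assembly[OF q L fR2_meas _ F2_meas, where C=C])
    fix R T'
    show "\<bar>\<Sum>K. pois (c * real N / 2) K / real N * ln (\<Sum>r<R. 1 / real R * exp (- beta * Hpair K (T' r)))\<bar> \<le> C"
      unfolding rw C_def
    proof (rule A_bound_gen[OF u0 a0 _ sm])
      fix k and I :: unit
      show "(\<Sum>r<R. 1 / real R * exp (- beta * Hpair k (T' r))) = 0 \<or>
         (a k \<le> (\<Sum>r<R. 1 / real R * exp (- beta * Hpair k (T' r))) \<and> (\<Sum>r<R. 1 / real R * exp (- beta * Hpair k (T' r))) \<le> b)"
      proof (cases "R = 0")
        case False
        then show ?thesis using mean_bounds[of R "a k" "\<lambda>r. exp (- beta * Hpair k (T' r))" b] Zb by auto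
      qed simp
    qed
  next
    fix xi T assume xi: "xi \<in> Delta1" and T: "T \<in> space (MT q)"
    define \<gamma> where "\<gamma> k (I::unit) \<alpha> = exp (- beta * Hpair k (T \<alpha>))" for k I \<alpha>
    have Wp: "prob_space (wmeas xi)" by (rule prob_space_wmeas[OF xi])
    have lim: "(\<lambda>R. \<integral>\<rho>. (\<Sum>k. \<Sum>I\<in>J k. u k I * ln (\<Sum>r<R. (1 / real R) * \<gamma> k I (\<rho> r))) \<partial>PiM UNIV (\<lambda>_. wmeas xi))
     \<longlonglongrightarrow> (\<Sum>k. \<Sum>I\<in>J k. u k I * ln (integral\<^sup>L (wmeas xi) (\<gamma> k I)))"
      by (rule inner_conv[OF Wp _ finJ u0 a0 _ _ sm]) (use Zb in \<open>auto simp: \<gamma>_def simp del: mult_minus_left\<close>)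
    have ig: "integral\<^sup>L (wmeas xi) (\<gamma> k I) = (\<Sum>\<alpha>. xi \<alpha> * exp (- beta * Hpair k (T \<alpha>)))" for k I
    proof -
      have "\<bar>\<gamma> k I \<alpha>\<bar> \<le> b" for \<alpha> using Zb[of k "T \<alpha>"] a0[of k] unfolding \<gamma>_def by linarith
      then show ?thesis unfolding \<gamma>_def by (rule integral_wmeas[OF xi])
    qed
    show "(\<lambda>R. \<integral>\<rho>. (\<Sum>K. pois (c * real N / 2) K / real N * ln (\<Sum>r<R. 1 / real R * exp (- beta * Hpair K (T (\<rho> r)))))
          \<partial>PiM UNIV (\<lambda>_. wmeas xi))
      \<longlonglongrightarrow> (case (xi, T) of (xi, T) \<Rightarrow> (\<Sum>K. pois (c * real N / 2) K / real N * ln (\<Sum>a. xi a * exp (- beta * Hpair K (T a)))))"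
      using lim unfolding rw ig \<gamma>_def by simp
  qed
  then show ?thesis unfolding G2R_def G2_def .
qed

theorem mainTheorem15:
  fixes q N :: nat and beta c :: real
    and L :: "((nat \<Rightarrow> real) \<times> (nat \<Rightarrow> nat \<Rightarrow> nat)) measure"
  assumes "q \<ge> 2" and "N \<ge> 1" and "beta \<ge> 0" and "c \<ge> 0"
    and "L \<in> S_laws q"
  shows "(\<lambda>R. G1R q N R beta c (frakL q L)) \<longlonglongrightarrow> G1 q N beta c L
       \<and> (\<lambda>R. G2R N R beta c (frakL q L)) \<longlonglongrightarrow> G2 N beta c L"
proof -
  have q: "q \<ge> 1" using assms(1) by simp
  show ?thesis using G1_conv[OF q assms(2-5)] G2_conv[OF q assms(2-5)] by simp
qed


end
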